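(* Let $\beta>1/2$, $m>0$, and let $X$ be a random variable with density $h_{\beta,m}(x)=C_{\beta,m}x^{-2\beta}e^{-m/x}$, $x\in(0,\infty)$, with median $\bar x_{\beta,m}$. Then for every $1\le p<\infty$ and every smooth $\phi:(0,\infty)\to\mathbb R$ with $E[|\phi(X)|^p]<\infty$, $$E\big[|\phi(X)-E(\phi(X))|^p\big]\le \big(p\,D(\beta,m)\big)^p\,E\big[X^p|\phi'(X)|^p\big],\qquad D(\beta,m)=\frac{1}{\bar x_{\beta,m}\,h_{\beta,m}(\bar x_{\beta,m})}.$$
   Context: $C_{\beta,m}>0$ is the normalizing constant making $h_{\beta,m}$ a probability density on $(0,\infty)$. The median $\bar x_{\beta,m}$ is the point where $\int_0^{\bar x_{\beta,m}}h_{\beta,m}(x)\,dx=1/2$. *)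

theory Defs
  imports "HOL-Analysis.Analysis"
begin

definition C_const :: "real \<Rightarrow> real \<Rightarrow> real" where
  "C_const \<beta> m = 1 / (LINT x:{0<..}|lborel. x powr (-2 * \<beta>) * exp (- m / x))"

definition h_dens :: "real \<Rightarrow> real \<Rightarrow> real \<Rightarrow> real" where
  "h_dens \<beta> m x = (if 0 < x then C_const \<beta> m * x powr (-2 * \<beta>) * exp (- m / x) else 0)"

definition smooth_on :: "real set \<Rightarrow> (real \<Rightarrow> real) \<Rightarrow> bool" where
  "smooth_on S f \<longleftrightarrow> (\<forall>n. \<forall>x\<in>S. ((deriv ^^ n) f) differentiable (at x))"

end

theory Submission
  imports Defs
begin
lemma young_p:
  fixes a b p :: real
  assumes "a > 0" "b \<ge> 0" "p \<ge> 1"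
  shows "a powr (p-1) * b \<le> (1 - 1/p) * a powr p + (1/p) * b powr p"
proof (cases "b = 0")
  case True then show ?thesis using assms by (simp add: field_simps)
next
  case False
  have "(a powr p) powr (1 - 1/p) * (b powr p) powr (1/p) \<le> (1 - 1/p) * a powr p + (1/p) * b powr p"
    using assms False by (intro Youngs_inequality_0) (auto simp: field_simps)
  moreover have "p * (1 - 1/p) = p - 1" using assms by (simp add: field_simps)
  then have "(a powr p) powr (1 - 1/p) = a powr (p-1)"
    using assms by (simp add: powr_powr)
  moreover have "(b powr p) powr (1/p) = b"
    using assms by (simp add: powr_powr)
  ultimately show ?thesis by simp
qed

lemma core:
  fixes U u Q h :: "real \<Rightarrow> real" and a b c p s :: real
  assumes ab: "0 \<le> a" "a \<le> b" and p: "1 \<le> p" and c: "0 \<le> c" and s: "s * s = 1"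
  and cU: "continuous_on {a..b} U" and cu: "continuous_on {a..b} u"
  and cQ: "continuous_on {a..b} Q" and ch: "continuous_on {a..b} h"
  and dU: "\<And>x. x \<in> {a<..<b} \<Longrightarrow> (U has_real_derivative s * u x) (at x)"
  and dQ: "\<And>x. x \<in> {a<..<b} \<Longrightarrow> (Q has_real_derivative - s * h x) (at x)"
  and nn: "\<And>x. x \<in> {a..b} \<Longrightarrow> 0 \<le> U x \<and> 0 \<le> u x \<and> 0 \<le> Q x \<and> 0 \<le> h x \<and> Q x \<le> c * x * h x"
  and ea: "U a = 0 \<or> Q a = 0" and eb: "U b = 0 \<or> Q b = 0"
  shows "integral {a..b} (\<lambda>x. U x powr p * h x)
           \<le> (p * c) powr p * integral {a..b} (\<lambda>x. x powr p * u x powr p * h x)"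
proof -
  define H where "H = integral {a..b} h"
  define I3 where "I3 = integral {a..b} (\<lambda>x. x powr p * u x powr p * h x)"
  define K where "K = (p * c) powr p"
  have H0: "H \<ge> 0" unfolding H_def using nn integrable_continuous_interval[OF ch] by (intro integral_nonneg) auto
  have intcont: "(\<lambda>x. f x) integrable_on {a..b}" if "continuous_on {a..b} f" for f :: "real \<Rightarrow> real"
    using that integrable_continuous_interval by blast
  have cI3: "continuous_on {a..b} (\<lambda>x. x powr p * u x powr p * h x)"
    using nn ab p by (intro continuous_intros cu ch continuous_on_powr') auto
  have key: "integral {a..b} (\<lambda>x. (U x + \<epsilon>) powr p * h x) \<le> p * \<epsilon> powr p * H + K * I3"
    if e: "\<epsilon> > 0" for \<epsilon>
  proof -
    define \<Phi> where "\<Phi> x = (U x + \<epsilon>) powr p - \<epsilon> powr p" for x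
    define J1 where "J1 x = p * (U x + \<epsilon>) powr (p-1) * u x * Q x" for x
    define J2 where "J2 x = \<Phi> x * h x" for x
    define I1 where "I1 = integral {a..b} (\<lambda>x. (U x + \<epsilon>) powr p * h x)"
    have pos: "x \<in> {a..b} \<Longrightarrow> U x + \<epsilon> > 0" for x using nn[of x] e by auto
    have cUe: "continuous_on {a..b} (\<lambda>x. (U x + \<epsilon>) powr p)"
      using pos by (intro continuous_intros cU) (fastforce simp: less_le)+
    have cPhi: "continuous_on {a..b} \<Phi>"
      unfolding \<Phi>_def by (intro continuous_on_diff cUe continuous_on_const)
    have cJ1: "continuous_on {a..b} J1"
      unfolding J1_def using pos by (intro continuous_intros cU cu cQ) (fastforce simp: less_le)+
    have cJ2: "continuous_on {a..b} J2"
      unfolding J2_def by (intro continuous_on_mult cPhi ch)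
    have cI1: "continuous_on {a..b} (\<lambda>x. (U x + \<epsilon>) powr p * h x)"
      by (intro continuous_on_mult cUe ch)
    have "((\<lambda>x. s * (J1 x - J2 x)) has_integral (\<Phi> b * Q b - \<Phi> a * Q a)) {a..b}"
    proof (rule fundamental_theorem_of_calculus_interior)
      show "a \<le> b" by (fact ab(2))
      show "continuous_on {a..b} (\<lambda>x. \<Phi> x * Q x)" by (intro continuous_on_mult cPhi cQ)
      fix x assume x: "x \<in> {a<..<b}"
      then have px: "U x + \<epsilon> > 0" using pos by auto
      have "((\<lambda>x. \<Phi> x * Q x) has_real_derivative
              (p * (U x + \<epsilon>) powr (p - 1) * (s * u x)) * Q x + \<Phi> x * (- s * h x)) (at x)"
        unfolding \<Phi>_def
        by (rule derivative_eq_intros dU[OF x] dQ[OF x] refl | use px in simp)+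
      moreover have "(p * (U x + \<epsilon>) powr (p - 1) * (s * u x)) * Q x + \<Phi> x * (- s * h x)
                 = s * (J1 x - J2 x)"
        unfolding J1_def J2_def by (simp add: algebra_simps)
      ultimately show "((\<lambda>x. \<Phi> x * Q x) has_vector_derivative s * (J1 x - J2 x)) (at x)"
        by (simp add: has_real_derivative_iff_has_vector_derivative)
    qed
    moreover have "\<Phi> b * Q b = 0" "\<Phi> a * Q a = 0"
      using ea eb unfolding \<Phi>_def by auto
    ultimately have "((\<lambda>x. s * (J1 x - J2 x)) has_integral 0) {a..b}" by simp
    then have "((\<lambda>x. s * (s * (J1 x - J2 x))) has_integral s * 0) {a..b}"
      by (rule has_integral_mult_right)
    then have "((\<lambda>x. J1 x - J2 x) has_integral 0) {a..b}"
      using s by (simp add: mult.assoc[symmetric])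
    then have "integral {a..b} (\<lambda>x. J1 x - J2 x) = 0" by (rule integral_unique)
    then have eqJ: "integral {a..b} J1 = integral {a..b} J2"
      using intcont[OF cJ1] intcont[OF cJ2] by (simp add: integral_diff)
    have J2eq: "integral {a..b} J2 = I1 - \<epsilon> powr p * H"
    proof -
      have "J2 = (\<lambda>x. (U x + \<epsilon>) powr p * h x - \<epsilon> powr p * h x)"
        unfolding J2_def \<Phi>_def by (auto simp: algebra_simps)
      have ci: "continuous_on {a..b} (\<lambda>x. \<epsilon> powr p * h x)" by (intro continuous_on_mult ch continuous_on_const)
      then show ?thesis unfolding I1_def H_def
        using intcont[OF cI1] intcont[OF ci] \<open>J2 = _\<close> by (simp add: integral_diff)
    qed
    have J1le: "J1 x \<le> (1 - 1/p) * ((U x + \<epsilon>) powr p * h x) + (1/p) * K * (x powr p * u x powr p * h x)"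
      if x: "x \<in> {a..b}" for x
    proof -
      have n: "0 \<le> U x" "0 \<le> u x" "0 \<le> Q x" "0 \<le> h x" "Q x \<le> c * x * h x" using nn[OF x] by auto
      have x0: "x \<ge> 0" using x ab by auto
      have "J1 x \<le> p * (U x + \<epsilon>) powr (p-1) * u x * (c * x * h x)"
        unfolding J1_def using n p by (intro mult_left_mono) auto
      also have "\<dots> = ((U x + \<epsilon>) powr (p-1) * (p * c * x * u x)) * h x" by (simp add: algebra_simps)
      also have "\<dots> \<le> ((1 - 1/p) * (U x + \<epsilon>) powr p + (1/p) * (p * c * x * u x) powr p) * h x"
        using n p c x0 pos[OF x] by (intro mult_right_mono young_p) auto
      also have "(p * c * x * u x) powr p = K * (x powr p * u x powr p)"
        unfolding K_def using p c x0 n by (simp add: powr_mult)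
      finally show ?thesis by (simp add: algebra_simps)
    qed
    have "integral {a..b} J1 \<le> integral {a..b} (\<lambda>x. (1 - 1/p) * ((U x + \<epsilon>) powr p * h x) + (1/p) * K * (x powr p * u x powr p * h x))"
    proof -
      have "continuous_on {a..b} (\<lambda>x. (1 - 1/p) * ((U x + \<epsilon>) powr p * h x) + (1/p) * K * (x powr p * u x powr p * h x))"
        by (intro continuous_on_add continuous_on_mult continuous_on_const cI1 cI3)
      then show ?thesis using J1le intcont[OF cJ1] intcont
        by (intro integral_le) auto
    qed
    also have "\<dots> = (1 - 1/p) * I1 + (1/p) * K * I3"
    proof -
      have "continuous_on {a..b} (\<lambda>x. (1 - 1/p) * ((U x + \<epsilon>) powr p * h x))"
           "continuous_on {a..b} (\<lambda>x. (1/p) * K * (x powr p * u x powr p * h x))"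
        by (intro continuous_on_add continuous_on_mult continuous_on_const cI1 cI3)+
      then show ?thesis using intcont[OF cI1] intcont[OF cI3] intcont by (simp add: integral_add I1_def I3_def)
    qed
    finally have "I1 - \<epsilon> powr p * H \<le> (1 - 1/p) * I1 + (1/p) * K * I3" using eqJ J2eq by simp
    then have "I1 / p \<le> \<epsilon> powr p * H + K * I3 / p" by (simp add: algebra_simps)
    then have "p * (I1 / p) \<le> p * (\<epsilon> powr p * H + K * I3 / p)" using p by (intro mult_left_mono) auto
    moreover have "p * (I1 / p) = I1" "p * (\<epsilon> powr p * H + K * I3 / p) = p * \<epsilon> powr p * H + K * I3"
      using p by (auto simp: field_simps)
    ultimately show ?thesis unfolding I1_def by simp
  qed
  have cU0: "continuous_on {a..b} (\<lambda>x. U x powr p * h x)"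
    using nn p by (intro continuous_intros cU ch continuous_on_powr') auto
  have le1: "integral {a..b} (\<lambda>x. U x powr p * h x) \<le> integral {a..b} (\<lambda>x. (U x + \<epsilon>) powr p * h x)"
    if "\<epsilon> > 0" for \<epsilon>
  proof -
    have cI1: "continuous_on {a..b} (\<lambda>x. (U x + \<epsilon>) powr p * h x)"
      using nn p that by (intro continuous_intros cU ch continuous_on_powr') auto
    show ?thesis
      using intcont[OF cU0] intcont[OF cI1] nn that p
      by (intro integral_le mult_right_mono powr_mono2) auto
  qed
  show ?thesis
  proof (rule field_le_epsilon)
    fix \<delta> :: real assume d: "\<delta> > 0"
    define \<epsilon> where "\<epsilon> = (\<delta> / (p * H + 1)) powr (1/p)"
    have pH: "p * H + 1 > 0" using H0 p by (simp add: add_nonneg_pos)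
    have e: "\<epsilon> > 0" unfolding \<epsilon>_def using d pH by simp
    have "\<epsilon> powr p = \<delta> / (p * H + 1)" unfolding \<epsilon>_def using d pH p by (simp add: powr_powr)
    then have E: "\<epsilon> powr p * (p * H + 1) = \<delta>" using pH by simp
    have E0: "\<epsilon> powr p \<ge> 0" by simp
    have "p * \<epsilon> powr p * H \<le> \<epsilon> powr p * (p * H + 1)" using E0 by (simp add: algebra_simps)
    then have "p * \<epsilon> powr p * H \<le> \<delta>" using E by simp
    then show "integral {a..b} (\<lambda>x. U x powr p * h x) \<le> (p * c) powr p * integral {a..b} (\<lambda>x. x powr p * u x powr p * h x) + \<delta>"
      using le1[OF e] key[OF e] unfolding K_def I3_def by linarith
  qed
qed

lemma ftc_abs:
  fixes \<phi> \<phi>' :: "real \<Rightarrow> real"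
  assumes ab: "a \<le> b" and d: "\<And>t. t \<in> {a..b} \<Longrightarrow> (\<phi> has_real_derivative \<phi>' t) (at t)"
    and c: "continuous_on {a..b} \<phi>'"
  shows "\<bar>\<phi> b - \<phi> a\<bar> \<le> integral {a..b} (\<lambda>t. \<bar>\<phi>' t\<bar>)"
proof -
  have hi: "(\<phi>' has_integral (\<phi> b - \<phi> a)) {a..b}"
  proof (rule fundamental_theorem_of_calculus[OF ab])
    fix t assume t: "t \<in> {a..b}"
    have "(\<phi> has_real_derivative \<phi>' t) (at t within {a..b})"
      by (rule has_field_derivative_at_within[OF d[OF t]])
    then show "(\<phi> has_vector_derivative \<phi>' t) (at t within {a..b})"
      by (simp add: has_real_derivative_iff_has_vector_derivative)
  qed
  then have eq: "\<phi> b - \<phi> a = integral {a..b} \<phi>'" by (rule integral_unique[symmetric])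
  have "norm (integral {a..b} \<phi>') \<le> integral {a..b} (\<lambda>t. \<bar>\<phi>' t\<bar>)"
  proof (rule integral_norm_bound_integral)
    show "\<phi>' integrable_on {a..b}" using hi by (rule has_integral_integrable)
    show "(\<lambda>t. \<bar>\<phi>' t\<bar>) integrable_on {a..b}"
      by (intro integrable_continuous_interval continuous_intros c)
  qed simp
  then show ?thesis using eq by simp
qed

lemma dens_facts:
  fixes \<beta> m xbar :: real
  defines "h \<equiv> h_dens \<beta> m"
  assumes m: "m > 0" and xb: "xbar > 0" and med: "(LINT x:{0<..xbar}|lborel. h x) = 1/2"
  shows "C_const \<beta> m > 0"
    and "\<And>x. x > 0 \<Longrightarrow> h x > 0"
    and "\<And>x. h x \<ge> 0"
    and "continuous_on {0<..} h"
    and "set_integrable lborel {0<..} h"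
    and "(\<integral>\<^sup>+x\<in>{0<..}. ennreal (h x) \<partial>lborel) = 1"
    and "(\<integral>\<^sup>+x\<in>{0<..xbar}. ennreal (h x) \<partial>lborel) = ennreal (1/2)"
proof -
  define k where "k x = x powr (-2 * \<beta>) * exp (- m / x)" for x
  define I where "I = (LINT x:{0<..}|lborel. k x)"
  have Cdef: "C_const \<beta> m = 1 / I" unfolding C_const_def I_def k_def by simp
  have hdef: "h x = (if 0 < x then C_const \<beta> m * k x else 0)" for x
    unfolding h_def h_dens_def k_def by simp
  have k0: "k x > 0" if "x > 0" for x using that unfolding k_def by simp
  have I0: "I \<ge> 0" unfolding I_def set_lebesgue_integral_def
    using k0 by (intro integral_nonneg_AE) (auto simp: indicator_def less_imp_le)
  have C0: "C_const \<beta> m \<noteq> 0"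
  proof
    assume "C_const \<beta> m = 0"
    then have "\<And>x. h x = 0" using hdef by simp
    then show False using med by simp
  qed
  then have Ipos: "I > 0" using I0 Cdef by auto
  then show Cpos: "C_const \<beta> m > 0" using Cdef by simp
  have kint: "set_integrable lborel {0<..} k"
  proof (rule ccontr)
    assume "\<not> ?thesis"
    then have "I = 0" unfolding I_def set_lebesgue_integral_def set_integrable_def
      by (simp add: not_integrable_integral_eq)
    then show False using Ipos by simp
  qed
  show hpos: "\<And>x. x > 0 \<Longrightarrow> h x > 0" using hdef k0 Cpos by simp
  show hnn: "\<And>x. h x \<ge> 0" using hpos hdef by (metis less_imp_le order_refl)
  have "continuous_on {0<..} (\<lambda>x. C_const \<beta> m * k x)"
    unfolding k_def by (intro continuous_intros) auto
  then show hc: "continuous_on {0<..} h"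
    by (rule continuous_on_cong[THEN iffD1, rotated 2]) (auto simp: hdef)
  have eqh: "(\<lambda>x. indicator {0<..} x *\<^sub>R h x) = (\<lambda>x. C_const \<beta> m *\<^sub>R (indicator {0<..} x *\<^sub>R k x))"
    by (auto simp: hdef indicator_def)
  show hint: "set_integrable lborel {0<..} h"
    unfolding set_integrable_def eqh using kint unfolding set_integrable_def by simp
  have "(\<integral>\<^sup>+x\<in>{0<..}. ennreal (h x) \<partial>lborel) = (\<integral>\<^sup>+x. ennreal (indicator {0<..} x *\<^sub>R h x) \<partial>lborel)"
    by (intro nn_integral_cong) (auto simp: indicator_def)
  also have "\<dots> = ennreal (LINT x|lborel. indicator {0<..} x *\<^sub>R h x)"
    using hint hnn unfolding set_integrable_def
    by (intro nn_integral_eq_integral) (auto simp: indicator_def)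
  also have "(LINT x|lborel. indicator {0<..} x *\<^sub>R h x) = C_const \<beta> m * I"
    unfolding eqh I_def set_lebesgue_integral_def by simp
  also have "C_const \<beta> m * I = 1" using Cdef Ipos by simp
  finally show "(\<integral>\<^sup>+x\<in>{0<..}. ennreal (h x) \<partial>lborel) = 1" by simp
  have hint2: "set_integrable lborel {0<..xbar} h"
    by (rule set_integrable_subset[OF hint]) auto
  have "(\<integral>\<^sup>+x\<in>{0<..xbar}. ennreal (h x) \<partial>lborel) = (\<integral>\<^sup>+x. ennreal (indicator {0<..xbar} x *\<^sub>R h x) \<partial>lborel)"
    by (intro nn_integral_cong) (auto simp: indicator_def)
  also have "\<dots> = ennreal (LINT x|lborel. indicator {0<..xbar} x *\<^sub>R h x)"
    using hint2 hnn unfolding set_integrable_def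
    by (intro nn_integral_eq_integral) (auto simp: indicator_def)
  also have "(LINT x|lborel. indicator {0<..xbar} x *\<^sub>R h x) = 1/2"
    using med unfolding set_lebesgue_integral_def by simp
  finally show "(\<integral>\<^sup>+x\<in>{0<..xbar}. ennreal (h x) \<partial>lborel) = ennreal (1/2)" by simp
qed

lemma h_meas[measurable]: "h_dens \<beta> m \<in> borel_measurable borel"
  unfolding h_dens_def by measurable

lemma h_ratio:
  fixes \<beta> m xbar y q :: real
  assumes C: "C_const \<beta> m > 0" and xb: "xbar > 0" and y: "y > 0" and q: "q > 0"
    and sg: "(1/xbar - 1/y) * (1 - 1/q) \<ge> 0" and m: "m > 0"
  shows "h_dens \<beta> m (q * y) * h_dens \<beta> m xbar \<le> h_dens \<beta> m (q * xbar) * h_dens \<beta> m y"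
proof -
  define C where "C = C_const \<beta> m"
  have e1: "(q * y) powr (- 2 * \<beta>) * xbar powr (- 2 * \<beta>) = (q * xbar) powr (- 2 * \<beta>) * y powr (- 2 * \<beta>)"
    using xb y q by (simp add: powr_mult)
  have "m * ((1/xbar - 1/y) * (1 - 1/q)) \<ge> 0" using m sg by simp
  moreover have "- m / (q*y) + - m / xbar = - m / (q*xbar) + - m / y - m * ((1/xbar - 1/y) * (1 - 1/q))"
    using xb y q by (simp add: field_simps)
  ultimately have "- m / (q*y) + - m / xbar \<le> - m / (q*xbar) + - m / y" by linarith
  then have e2: "exp (- m / (q*y)) * exp (- m / xbar) \<le> exp (- m / (q*xbar)) * exp (- m / y)"
    by (simp add: exp_add[symmetric])
  have "h_dens \<beta> m (q * y) * h_dens \<beta> m xbar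
        = (C * C) * ((q*y) powr (-2*\<beta>) * xbar powr (-2*\<beta>)) * (exp (- m / (q*y)) * exp (- m / xbar))"
    using xb y q unfolding h_dens_def C_def by (simp add: algebra_simps)
  also have "\<dots> \<le> (C * C) * ((q*xbar) powr (-2*\<beta>) * y powr (-2*\<beta>)) * (exp (- m / (q*xbar)) * exp (- m / y))"
    unfolding e1 using C e2 unfolding C_def by (intro mult_left_mono) auto
  also have "\<dots> = h_dens \<beta> m (q * xbar) * h_dens \<beta> m y"
    using xb y q unfolding h_dens_def C_def by (simp add: algebra_simps)
  finally show ?thesis .
qed

lemma split_int:
  fixes f :: "real \<Rightarrow> ennreal" and a :: real
  assumes a: "a > 0" and f: "(\<lambda>x. f x * indicator {0<..} x) \<in> borel_measurable borel"
  shows "(\<integral>\<^sup>+x\<in>{0<..}. f x \<partial>lborel) = (\<integral>\<^sup>+x\<in>{0<..a}. f x \<partial>lborel) + (\<integral>\<^sup>+x\<in>{a..}. f x \<partial>lborel)"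
proof -
  have m1: "(\<lambda>x. f x * indicator {0<..} x * indicator {0<..a} x) \<in> borel_measurable lborel"
    using f by measurable
  have m2: "(\<lambda>x. f x * indicator {0<..} x * indicator {a<..} x) \<in> borel_measurable lborel"
    using f by measurable
  have "(\<integral>\<^sup>+x\<in>{a..}. f x \<partial>lborel) = (\<integral>\<^sup>+x\<in>{a<..}. f x \<partial>lborel)"
    by (intro nn_integral_cong_AE) (use AE_lborel_singleton[of a] in \<open>auto elim!: eventually_mono simp: indicator_def\<close>)
  moreover have "(\<integral>\<^sup>+x\<in>{0<..}. f x \<partial>lborel) = (\<integral>\<^sup>+x. f x * indicator {0<..} x * indicator {0<..a} x + f x * indicator {0<..} x * indicator {a<..} x \<partial>lborel)"
    using a by (intro nn_integral_cong) (auto simp: indicator_def)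
  moreover have "\<dots> = (\<integral>\<^sup>+x. f x * indicator {0<..} x * indicator {0<..a} x \<partial>lborel) + (\<integral>\<^sup>+x. f x * indicator {0<..} x * indicator {a<..} x \<partial>lborel)"
    using m1 m2 by (rule nn_integral_add)
  moreover have "(\<integral>\<^sup>+x. f x * indicator {0<..} x * indicator {0<..a} x \<partial>lborel) = (\<integral>\<^sup>+x\<in>{0<..a}. f x \<partial>lborel)"
    by (intro nn_integral_cong) (auto simp: indicator_def)
  moreover have "(\<integral>\<^sup>+x. f x * indicator {0<..} x * indicator {a<..} x \<partial>lborel) = (\<integral>\<^sup>+x\<in>{a<..}. f x \<partial>lborel)"
    using a by (intro nn_integral_cong) (auto simp: indicator_def)
  ultimately show ?thesis by simp
qed

lemma hazard_right:
  fixes \<beta> m xbar x :: real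
  assumes C: "C_const \<beta> m > 0" and xb: "xbar > 0" and x: "xbar \<le> x" and m: "m > 0"
  shows "(\<integral>\<^sup>+t\<in>{x..}. ennreal (h_dens \<beta> m t) \<partial>lborel)
         \<le> ennreal (x * h_dens \<beta> m x / (xbar * h_dens \<beta> m xbar)) * (\<integral>\<^sup>+t\<in>{xbar..}. ennreal (h_dens \<beta> m t) \<partial>lborel)"
proof -
  define h where "h = h_dens \<beta> m"
  define l where "l = x / xbar"
  have l: "l \<ge> 1" "l > 0" using x xb unfolding l_def by auto
  have lx: "l * xbar = x" using xb unfolding l_def by simp
  have hxb: "h xbar > 0" using C xb unfolding h_def h_dens_def by simp
  have hnn: "h t \<ge> 0" for t using C unfolding h_def h_dens_def by simp
  have "(\<integral>\<^sup>+t\<in>{x..}. ennreal (h t) \<partial>lborel) = ennreal l * (\<integral>\<^sup>+s. ennreal (h (0 + l * s)) * indicator {x..} (0 + l * s) \<partial>lborel)"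
    using l by (subst nn_integral_real_affine[where c=l and t=0]) (auto simp: h_def)
  also have "\<dots> \<le> ennreal l * (\<integral>\<^sup>+s. ennreal (h x / h xbar) * (ennreal (h s) * indicator {xbar..} s) \<partial>lborel)"
  proof (intro mult_left_mono nn_integral_mono)
    fix s
    show "ennreal (h (0 + l * s)) * indicator {x..} (0 + l * s) \<le> ennreal (h x / h xbar) * (ennreal (h s) * indicator {xbar..} s)"
    proof (cases "xbar \<le> s")
      case True
      then have s0: "s > 0" using xb by auto
      have "(1/xbar - 1/s) * (1 - 1/l) \<ge> 0" using True xb l by (intro mult_nonneg_nonneg) (auto simp: field_simps)
      then have "h (l * s) * h xbar \<le> h x * h s"
        using h_ratio[OF C xb s0 l(2) _ m] lx unfolding h_def by simp
      then have "h (l * s) \<le> h x / h xbar * h s" using hxb by (simp add: field_simps)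
      moreover have "x \<le> l * s" using True lx l by (metis mult_left_mono less_imp_le)
      moreover have "ennreal (h (l * s)) \<le> ennreal (h x / h xbar) * ennreal (h s)"
        using calculation hxb hnn by (subst ennreal_mult[symmetric]) (auto intro!: ennreal_leI simp: field_simps)
      ultimately show ?thesis using True by (simp add: indicator_def)
    next
      case False
      then have "\<not> x \<le> l * s" using lx l
        by (metis mult_le_cancel_left_pos)
      then show ?thesis using False by simp
    qed
  qed auto
  also have "\<dots> = ennreal l * (ennreal (h x / h xbar) * (\<integral>\<^sup>+s\<in>{xbar..}. ennreal (h s) \<partial>lborel))"
    by (subst nn_integral_cmult) (auto simp: h_def mult.assoc)
  also have "\<dots> = ennreal (l * (h x / h xbar)) * (\<integral>\<^sup>+s\<in>{xbar..}. ennreal (h s) \<partial>lborel)"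
  proof -
    have "ennreal (l * (h x / h xbar)) = ennreal l * ennreal (h x / h xbar)"
      using l hxb hnn[of x] by (intro ennreal_mult) auto
    then show ?thesis by (simp only: mult.assoc)
  qed
  also have "l * (h x / h xbar) = x * h x / (xbar * h xbar)" unfolding l_def by simp
  finally show ?thesis unfolding h_def .
qed

lemma hazard_left:
  fixes \<beta> m xbar x :: real
  assumes C: "C_const \<beta> m > 0" and xb: "xbar \<ge> x" and x: "0 < x" and m: "m > 0"
  shows "(\<integral>\<^sup>+t\<in>{0<..x}. ennreal (h_dens \<beta> m t) \<partial>lborel)
         \<le> ennreal (x * h_dens \<beta> m x / (xbar * h_dens \<beta> m xbar)) * (\<integral>\<^sup>+t\<in>{0<..xbar}. ennreal (h_dens \<beta> m t) \<partial>lborel)"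
proof -
  define h where "h = h_dens \<beta> m"
  define l where "l = x / xbar"
  have xb0: "xbar > 0" using xb x by auto
  have l: "l \<le> 1" "l > 0" using x xb xb0 unfolding l_def by auto
  have lx: "l * xbar = x" using xb0 unfolding l_def by simp
  have hxb: "h xbar > 0" using C xb0 unfolding h_def h_dens_def by simp
  have hnn: "h t \<ge> 0" for t using C unfolding h_def h_dens_def by simp
  have "(\<integral>\<^sup>+t\<in>{0<..x}. ennreal (h t) \<partial>lborel) = ennreal l * (\<integral>\<^sup>+s. ennreal (h (0 + l * s)) * indicator {0<..x} (0 + l * s) \<partial>lborel)"
    using l by (subst nn_integral_real_affine[where c=l and t=0]) (auto simp: h_def)
  also have "\<dots> \<le> ennreal l * (\<integral>\<^sup>+s. ennreal (h x / h xbar) * (ennreal (h s) * indicator {0<..xbar} s) \<partial>lborel)"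
  proof (intro mult_left_mono nn_integral_mono)
    fix s
    show "ennreal (h (0 + l * s)) * indicator {0<..x} (0 + l * s) \<le> ennreal (h x / h xbar) * (ennreal (h s) * indicator {0<..xbar} s)"
    proof (cases "0 < s \<and> s \<le> xbar")
      case True
      then have s0: "s > 0" by auto
      have "(1/xbar - 1/s) * (1 - 1/l) \<ge> 0" using True xb0 l by (intro mult_nonpos_nonpos) (auto simp: field_simps)
      then have "h (l * s) * h xbar \<le> h x * h s"
        using h_ratio[OF C xb0 s0 l(2) _ m] lx unfolding h_def by simp
      then have "h (l * s) \<le> h x / h xbar * h s" using hxb by (simp add: field_simps)
      moreover have "ennreal (h (l * s)) \<le> ennreal (h x / h xbar) * ennreal (h s)"
        using calculation hxb hnn by (subst ennreal_mult[symmetric]) (auto intro!: ennreal_leI simp: field_simps)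
      ultimately show ?thesis using True lx l by (auto simp: indicator_def mult_left_mono)
    next
      case False
      then have "\<not> (0 < l * s \<and> l * s \<le> x)" using lx l
        by (metis mult_le_cancel_left_pos zero_less_mult_pos)
      then show ?thesis using False by (auto simp: indicator_def)
    qed
  qed auto
  also have "\<dots> = ennreal l * (ennreal (h x / h xbar) * (\<integral>\<^sup>+s\<in>{0<..xbar}. ennreal (h s) \<partial>lborel))"
    by (subst nn_integral_cmult) (auto simp: h_def mult.assoc)
  also have "\<dots> = ennreal (l * (h x / h xbar)) * (\<integral>\<^sup>+s\<in>{0<..xbar}. ennreal (h s) \<partial>lborel)"
  proof -
    have "ennreal (l * (h x / h xbar)) = ennreal l * ennreal (h x / h xbar)"
      using l hxb hnn[of x] by (intro ennreal_mult) auto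
    then show ?thesis by (simp only: mult.assoc)
  qed
  also have "l * (h x / h xbar) = x * h x / (xbar * h xbar)" unfolding l_def by simp
  finally show ?thesis unfolding h_def .
qed

lemma meas_cont:
  fixes f :: "real \<Rightarrow> real"
  assumes "continuous_on A f" "A \<in> sets borel"
  shows "(\<lambda>x. ennreal (f x) * indicator A x) \<in> borel_measurable borel"
proof -
  have "(\<lambda>x. indicator A x *\<^sub>R f x) \<in> borel_measurable borel"
    using assms by (intro borel_measurable_continuous_on_indicator)
  then have "(\<lambda>x. ennreal (indicator A x *\<^sub>R f x)) \<in> borel_measurable borel" by measurable
  moreover have "(\<lambda>x. ennreal (indicator A x *\<^sub>R f x)) = (\<lambda>x. ennreal (f x) * indicator A x)"
    by (auto simp: indicator_def)
  ultimately show ?thesis by simp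
qed

lemma lim_sets:
  fixes g :: "real \<Rightarrow> ennreal" and A :: "nat \<Rightarrow> real set"
  assumes inc: "incseq A" and un: "(\<Union>n. A n) = S"
    and meas: "\<And>n. (\<lambda>x. g x * indicator (A n) x) \<in> borel_measurable borel"
    and bd: "\<And>n. (\<integral>\<^sup>+x\<in>A n. g x \<partial>lborel) \<le> B"
  shows "(\<integral>\<^sup>+x\<in>S. g x \<partial>lborel) \<le> B"
proof -
  have eq: "(\<lambda>x. g x * indicator S x) = (\<lambda>x. SUP n. g x * indicator (A n) x)"
  proof
    fix x
    show "g x * indicator S x = (SUP n. g x * indicator (A n) x)"
    proof (cases "x \<in> S")
      case True
      then obtain n where n: "x \<in> A n" using un by auto
      show ?thesis
      proof (rule antisym)
        show "g x * indicator S x \<le> (SUP n. g x * indicator (A n) x)"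
          using n True by (intro SUP_upper2[of n]) auto
        show "(SUP n. g x * indicator (A n) x) \<le> g x * indicator S x"
          using True by (intro SUP_least) (auto simp: indicator_def)
      qed
    next
      case False
      then have "\<And>n. x \<notin> A n" using un by auto
      then show ?thesis using False by simp
    qed
  qed
  have incf: "incseq (\<lambda>n x. g x * indicator (A n) x)"
  proof (rule incseq_SucI, rule le_funI)
    fix n x
    show "g x * indicator (A n) x \<le> g x * indicator (A (Suc n)) x"
      using inc[THEN monoD, of n "Suc n"] by (auto simp: indicator_def)
  qed
  have "(\<integral>\<^sup>+x\<in>S. g x \<partial>lborel) = (SUP n. (\<integral>\<^sup>+x\<in>A n. g x \<partial>lborel))"
    unfolding eq using incf meas
    by (subst nn_integral_monotone_convergence_SUP[symmetric]) (auto simp: measurable_lborel1)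
  also have "\<dots> \<le> B" using bd by (intro SUP_least) auto
  finally show ?thesis .
qed

lemma seg_right:
  fixes \<phi> \<phi>' h :: "real \<Rightarrow> real" and xbar R c p :: real
  assumes xb: "0 < xbar" "xbar \<le> R" and p: "1 \<le> p" and c: "0 \<le> c"
    and dphi: "\<And>x. 0 < x \<Longrightarrow> (\<phi> has_real_derivative \<phi>' x) (at x)"
    and cphi': "continuous_on {0<..} \<phi>'"
    and ch: "continuous_on {0<..} h" and hnn: "\<And>x. 0 \<le> h x"
    and tail: "\<And>x. xbar \<le> x \<Longrightarrow> x \<le> R \<Longrightarrow> integral {x..R} h \<le> c * x * h x"
  shows "integral {xbar..R} (\<lambda>x. \<bar>\<phi> x - \<phi> xbar\<bar> powr p * h x)
          \<le> (p*c) powr p * integral {xbar..R} (\<lambda>x. x powr p * \<bar>\<phi>' x\<bar> powr p * h x)"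
proof -
  have sub: "{xbar..R} \<subseteq> {0<..}" using xb by auto
  have cu: "continuous_on {xbar..R} (\<lambda>x. \<bar>\<phi>' x\<bar>)"
    using continuous_on_subset[OF cphi' sub] by (intro continuous_intros)
  have chI: "continuous_on {xbar..R} h" using continuous_on_subset[OF ch sub] .
  have cphi: "continuous_on {xbar..R} \<phi>"
  proof (rule DERIV_continuous_on[where D=\<phi>'])
    fix x assume "x \<in> {xbar..R}"
    then have "0 < x" using xb by simp
    then show "(\<phi> has_field_derivative \<phi>' x) (at x within {xbar..R})"
      by (rule has_field_derivative_at_within[OF dphi])
  qed
  define U where "U x = integral {xbar..x} (\<lambda>t. \<bar>\<phi>' t\<bar>)" for x
  define Q where "Q x = integral {xbar..R} h - integral {xbar..x} h" for x
  have intr: "f integrable_on {a..b}"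
    if "continuous_on {xbar..R} f" "a \<in> {xbar..R}" "b \<in> {xbar..R}" for f :: "real \<Rightarrow> real" and a b :: real
    by (rule integrable_continuous_interval[OF continuous_on_subset[OF that(1)]]) (use that in auto)
  have dUw: "(U has_real_derivative \<bar>\<phi>' x\<bar>) (at x within {xbar..R})" if "x \<in> {xbar..R}" for x
    unfolding U_def using integral_has_real_derivative[OF cu that] .
  have dQw: "(Q has_real_derivative - h x) (at x within {xbar..R})" if "x \<in> {xbar..R}" for x
    unfolding Q_def using DERIV_diff[OF DERIV_const integral_has_real_derivative[OF chI that]]
    by simp
  have cU: "continuous_on {xbar..R} U" using dUw by (rule DERIV_continuous_on)
  have cQ: "continuous_on {xbar..R} Q" using dQw by (rule DERIV_continuous_on)
  have int_at: "at x within {xbar..R} = at x" if "x \<in> {xbar<..<R}" for x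
    using that by (intro at_within_interior) auto
  have Qeq: "Q x = integral {x..R} h" if "x \<in> {xbar..R}" for x
  proof -
    have "integral {xbar..x} h + integral {x..R} h = integral {xbar..R} h"
      by (rule Henstock_Kurzweil_Integration.integral_combine) (use that intr[OF chI, of xbar R] xb in auto)
    then show ?thesis unfolding Q_def by simp
  qed
  have core_app: "integral {xbar..R} (\<lambda>x. U x powr p * h x)
           \<le> (p * c) powr p * integral {xbar..R} (\<lambda>x. x powr p * \<bar>\<phi>' x\<bar> powr p * h x)"
  proof (rule core[where s=1 and Q=Q and u="\<lambda>x. \<bar>\<phi>' x\<bar>"])
    show "0 \<le> xbar" "xbar \<le> R" using xb by auto
    show "1 \<le> p" "0 \<le> c" "1 * 1 = (1::real)" using p c by auto
    show "continuous_on {xbar..R} U" "continuous_on {xbar..R} (\<lambda>x. \<bar>\<phi>' x\<bar>)"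
      "continuous_on {xbar..R} Q" "continuous_on {xbar..R} h" by (fact cU cu cQ chI)+
    show "(U has_real_derivative 1 * \<bar>\<phi>' x\<bar>) (at x)" if "x \<in> {xbar<..<R}" for x
    proof -
      have "x \<in> {xbar..R}" using that by auto
      from dUw[OF this] show ?thesis using int_at[OF that] by simp
    qed
    show "(Q has_real_derivative - 1 * h x) (at x)" if "x \<in> {xbar<..<R}" for x
    proof -
      have "x \<in> {xbar..R}" using that by auto
      from dQw[OF this] show ?thesis using int_at[OF that] by simp
    qed
    show "0 \<le> U x \<and> 0 \<le> \<bar>\<phi>' x\<bar> \<and> 0 \<le> Q x \<and> 0 \<le> h x \<and> Q x \<le> c * x * h x"
      if x: "x \<in> {xbar..R}" for x
    proof -
      have "0 \<le> U x" unfolding U_def using x by (intro integral_nonneg intr[OF cu]) auto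
      moreover have "0 \<le> Q x" unfolding Qeq[OF x] using x hnn by (intro integral_nonneg intr[OF chI]) auto
      moreover have "Q x \<le> c * x * h x" unfolding Qeq[OF x] using x tail by auto
      ultimately show ?thesis using hnn by auto
    qed
    show "U xbar = 0 \<or> Q xbar = 0" unfolding U_def by simp
    show "U R = 0 \<or> Q R = 0" unfolding Q_def by simp
  qed
  have pw: "\<bar>\<phi> x - \<phi> xbar\<bar> \<le> U x" if x: "x \<in> {xbar..R}" for x
    unfolding U_def
  proof (rule ftc_abs)
    show "xbar \<le> x" using x by simp
    show "(\<phi> has_real_derivative \<phi>' t) (at t)" if "t \<in> {xbar..x}" for t
      using that xb by (intro dphi) simp
    show "continuous_on {xbar..x} \<phi>'" by (rule continuous_on_subset[OF cphi']) (use xb in auto)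
  qed
  have "integral {xbar..R} (\<lambda>x. \<bar>\<phi> x - \<phi> xbar\<bar> powr p * h x) \<le> integral {xbar..R} (\<lambda>x. U x powr p * h x)"
  proof (rule integral_le)
    show "(\<lambda>x. \<bar>\<phi> x - \<phi> xbar\<bar> powr p * h x) integrable_on {xbar..R}"
      using p by (intro integrable_continuous_interval continuous_intros cphi chI continuous_on_powr') auto
    have Unn: "0 \<le> U x" if "x \<in> {xbar..R}" for x
      using pw[OF that] by (meson abs_ge_zero order_trans)
    show "(\<lambda>x. U x powr p * h x) integrable_on {xbar..R}"
      using Unn p by (intro integrable_continuous_interval continuous_intros cU chI continuous_on_powr') auto
    show "\<bar>\<phi> x - \<phi> xbar\<bar> powr p * h x \<le> U x powr p * h x" if "x \<in> {xbar..R}" for x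
      using pw[OF that] hnn p by (intro mult_right_mono powr_mono2) auto
  qed
  then show ?thesis using core_app by linarith
qed

lemma seg_left:
  fixes \<phi> \<phi>' h :: "real \<Rightarrow> real" and xbar r c p :: real
  assumes xb: "0 < r" "r \<le> xbar" and p: "1 \<le> p" and c: "0 \<le> c"
    and dphi: "\<And>x. 0 < x \<Longrightarrow> (\<phi> has_real_derivative \<phi>' x) (at x)"
    and cphi': "continuous_on {0<..} \<phi>'"
    and ch: "continuous_on {0<..} h" and hnn: "\<And>x. 0 \<le> h x"
    and head: "\<And>x. r \<le> x \<Longrightarrow> x \<le> xbar \<Longrightarrow> integral {r..x} h \<le> c * x * h x"
  shows "integral {r..xbar} (\<lambda>x. \<bar>\<phi> x - \<phi> xbar\<bar> powr p * h x)
          \<le> (p*c) powr p * integral {r..xbar} (\<lambda>x. x powr p * \<bar>\<phi>' x\<bar> powr p * h x)"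
proof -
  have sub: "{r..xbar} \<subseteq> {0<..}" using xb by auto
  have cu: "continuous_on {r..xbar} (\<lambda>x. \<bar>\<phi>' x\<bar>)"
    using continuous_on_subset[OF cphi' sub] by (intro continuous_intros)
  have chI: "continuous_on {r..xbar} h" using continuous_on_subset[OF ch sub] .
  have cphi: "continuous_on {r..xbar} \<phi>"
  proof (rule DERIV_continuous_on[where D=\<phi>'])
    fix x assume "x \<in> {r..xbar}"
    then have "0 < x" using xb by simp
    then show "(\<phi> has_field_derivative \<phi>' x) (at x within {r..xbar})"
      by (rule has_field_derivative_at_within[OF dphi])
  qed
  define U where "U x = integral {r..xbar} (\<lambda>t. \<bar>\<phi>' t\<bar>) - integral {r..x} (\<lambda>t. \<bar>\<phi>' t\<bar>)" for x
  define Q where "Q x = integral {r..x} h" for x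
  have intr: "f integrable_on {a..b}"
    if "continuous_on {r..xbar} f" "a \<in> {r..xbar}" "b \<in> {r..xbar}" for f :: "real \<Rightarrow> real" and a b :: real
    by (rule integrable_continuous_interval[OF continuous_on_subset[OF that(1)]]) (use that in auto)
  have dUw: "(U has_real_derivative - \<bar>\<phi>' x\<bar>) (at x within {r..xbar})" if "x \<in> {r..xbar}" for x
    unfolding U_def using DERIV_diff[OF DERIV_const integral_has_real_derivative[OF cu that]]
    by simp
  have dQw: "(Q has_real_derivative h x) (at x within {r..xbar})" if "x \<in> {r..xbar}" for x
    unfolding Q_def using integral_has_real_derivative[OF chI that] .
  have cU: "continuous_on {r..xbar} U" using dUw by (rule DERIV_continuous_on)
  have cQ: "continuous_on {r..xbar} Q" using dQw by (rule DERIV_continuous_on)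
  have int_at: "at x within {r..xbar} = at x" if "x \<in> {r<..<xbar}" for x
    using that by (intro at_within_interior) auto
  have Ueq: "U x = integral {x..xbar} (\<lambda>t. \<bar>\<phi>' t\<bar>)" if "x \<in> {r..xbar}" for x
  proof -
    have "integral {r..x} (\<lambda>t. \<bar>\<phi>' t\<bar>) + integral {x..xbar} (\<lambda>t. \<bar>\<phi>' t\<bar>) = integral {r..xbar} (\<lambda>t. \<bar>\<phi>' t\<bar>)"
      by (rule Henstock_Kurzweil_Integration.integral_combine) (use that intr[OF cu, of r xbar] xb in auto)
    then show ?thesis unfolding U_def by simp
  qed
  have core_app: "integral {r..xbar} (\<lambda>x. U x powr p * h x)
           \<le> (p * c) powr p * integral {r..xbar} (\<lambda>x. x powr p * \<bar>\<phi>' x\<bar> powr p * h x)"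
  proof (rule core[where s="-1" and Q=Q and u="\<lambda>x. \<bar>\<phi>' x\<bar>"])
    show "0 \<le> r" "r \<le> xbar" using xb by auto
    show "1 \<le> p" "0 \<le> c" "-1 * -1 = (1::real)" using p c by auto
    show "continuous_on {r..xbar} U" "continuous_on {r..xbar} (\<lambda>x. \<bar>\<phi>' x\<bar>)"
      "continuous_on {r..xbar} Q" "continuous_on {r..xbar} h" by (fact cU cu cQ chI)+
    show "(U has_real_derivative -1 * \<bar>\<phi>' x\<bar>) (at x)" if "x \<in> {r<..<xbar}" for x
    proof -
      have "x \<in> {r..xbar}" using that by auto
      from dUw[OF this] show ?thesis using int_at[OF that] by simp
    qed
    show "(Q has_real_derivative - (-1) * h x) (at x)" if "x \<in> {r<..<xbar}" for x
    proof -
      have "x \<in> {r..xbar}" using that by auto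
      from dQw[OF this] show ?thesis using int_at[OF that] by simp
    qed
    show "0 \<le> U x \<and> 0 \<le> \<bar>\<phi>' x\<bar> \<and> 0 \<le> Q x \<and> 0 \<le> h x \<and> Q x \<le> c * x * h x"
      if x: "x \<in> {r..xbar}" for x
    proof -
      have "0 \<le> U x" unfolding Ueq[OF x] using x by (intro integral_nonneg intr[OF cu]) auto
      moreover have "0 \<le> Q x" unfolding Q_def using x hnn by (intro integral_nonneg intr[OF chI]) auto
      moreover have "Q x \<le> c * x * h x" unfolding Q_def using x head by auto
      ultimately show ?thesis using hnn by auto
    qed
    show "U r = 0 \<or> Q r = 0" unfolding Q_def by simp
    show "U xbar = 0 \<or> Q xbar = 0" unfolding U_def by simp
  qed
  have pw: "\<bar>\<phi> x - \<phi> xbar\<bar> \<le> U x" if x: "x \<in> {r..xbar}" for x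
  proof -
    have "\<bar>\<phi> xbar - \<phi> x\<bar> \<le> integral {x..xbar} (\<lambda>t. \<bar>\<phi>' t\<bar>)"
    proof (rule ftc_abs)
      show "x \<le> xbar" using x by simp
      show "(\<phi> has_real_derivative \<phi>' t) (at t)" if "t \<in> {x..xbar}" for t
        using that xb x by (intro dphi) simp
      show "continuous_on {x..xbar} \<phi>'" by (rule continuous_on_subset[OF cphi']) (use xb x in auto)
    qed
    then show ?thesis using Ueq[OF x] by simp
  qed
  have "integral {r..xbar} (\<lambda>x. \<bar>\<phi> x - \<phi> xbar\<bar> powr p * h x) \<le> integral {r..xbar} (\<lambda>x. U x powr p * h x)"
  proof (rule integral_le)
    show "(\<lambda>x. \<bar>\<phi> x - \<phi> xbar\<bar> powr p * h x) integrable_on {r..xbar}"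
      using p by (intro integrable_continuous_interval continuous_intros cphi chI continuous_on_powr') auto
    have Unn: "0 \<le> U x" if "x \<in> {r..xbar}" for x
      using pw[OF that] by (meson abs_ge_zero order_trans)
    show "(\<lambda>x. U x powr p * h x) integrable_on {r..xbar}"
      using Unn p by (intro integrable_continuous_interval continuous_intros cU chI continuous_on_powr') auto
    show "\<bar>\<phi> x - \<phi> xbar\<bar> powr p * h x \<le> U x powr p * h x" if "x \<in> {r..xbar}" for x
      using pw[OF that] hnn p by (intro mult_right_mono powr_mono2) auto
  qed
  then show ?thesis using core_app by linarith
qed

lemma conv:
  fixes f :: "real \<Rightarrow> real"
  assumes "continuous_on {a..b} f" "\<And>x. x \<in> {a..b} \<Longrightarrow> 0 \<le> f x"
  shows "(\<integral>\<^sup>+x\<in>{a..b}. ennreal (f x) \<partial>lborel) = ennreal (integral {a..b} f)"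
  using assms by (intro nn_integral_has_integral_lebesgue') (auto intro: integrable_integral integrable_continuous_interval)

lemma set_mono_nn:
  fixes f :: "real \<Rightarrow> ennreal"
  assumes "A \<subseteq> B"
  shows "(\<integral>\<^sup>+x\<in>A. f x \<partial>lborel) \<le> (\<integral>\<^sup>+x\<in>B. f x \<partial>lborel)"
  using assms by (intro nn_integral_mono) (auto simp: indicator_def)

lemma half_right:
  fixes \<phi> \<phi>' h :: "real \<Rightarrow> real" and xbar c p :: real
  assumes xb: "0 < xbar" and p: "1 \<le> p" and c: "0 \<le> c"
    and dphi: "\<And>x. 0 < x \<Longrightarrow> (\<phi> has_real_derivative \<phi>' x) (at x)"
    and cphi': "continuous_on {0<..} \<phi>'"
    and ch: "continuous_on {0<..} h" and hnn: "\<And>x. 0 \<le> h x"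
    and tail: "\<And>x. xbar \<le> x \<Longrightarrow> (\<integral>\<^sup>+t\<in>{x..}. ennreal (h t) \<partial>lborel) \<le> ennreal (c * x * h x)"
  shows "(\<integral>\<^sup>+x\<in>{xbar..}. ennreal (\<bar>\<phi> x - \<phi> xbar\<bar> powr p * h x) \<partial>lborel)
         \<le> ennreal ((p*c) powr p) * (\<integral>\<^sup>+x\<in>{xbar..}. ennreal (x powr p * \<bar>\<phi>' x\<bar> powr p * h x) \<partial>lborel)"
proof (rule lim_sets[where A="\<lambda>n. {xbar..xbar + real n}"])
  show "incseq (\<lambda>n. {xbar..xbar + real n})" by (auto simp: incseq_def)
  show "(\<Union>n. {xbar..xbar + real n}) = {xbar..}"
  proof (intro set_eqI iffI)
    fix x assume "x \<in> (\<Union>n. {xbar..xbar + real n})" then show "x \<in> {xbar..}" by auto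
  next
    fix x assume "x \<in> {xbar..}"
    then have "xbar \<le> x" by simp
    obtain n where "x - xbar \<le> real n" using real_arch_simple by blast
    then show "x \<in> (\<Union>n. {xbar..xbar + real n})" using \<open>xbar \<le> x\<close> by (intro UN_I[of n]) auto
  qed
  have cphi: "continuous_on {0<..} \<phi>"
  proof (rule DERIV_continuous_on[where D=\<phi>'])
    fix x :: real assume "x \<in> {0<..}"
    then show "(\<phi> has_field_derivative \<phi>' x) (at x within {0<..})"
      by (intro has_field_derivative_at_within[OF dphi]) simp
  qed
  fix n
  define R where "R = xbar + real n"
  have sub: "{xbar..R} \<subseteq> {0<..}" using xb by auto
  have cg: "continuous_on {xbar..R} (\<lambda>x. \<bar>\<phi> x - \<phi> xbar\<bar> powr p * h x)"
    using p continuous_on_subset[OF cphi sub] continuous_on_subset[OF ch sub]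
    by (intro continuous_intros continuous_on_powr') auto
  show "(\<lambda>x. ennreal (\<bar>\<phi> x - \<phi> xbar\<bar> powr p * h x) * indicator {xbar..xbar + real n} x) \<in> borel_measurable borel"
    using cg unfolding R_def by (intro meas_cont) auto
  have cw: "continuous_on {xbar..R} (\<lambda>x. x powr p * \<bar>\<phi>' x\<bar> powr p * h x)"
    using p continuous_on_subset[OF cphi' sub] continuous_on_subset[OF ch sub] xb
    by (intro continuous_intros continuous_on_powr') auto
  have tailR: "integral {x..R} h \<le> c * x * h x" if "xbar \<le> x" "x \<le> R" for x
  proof -
    have sub2: "{x..R} \<subseteq> {0<..}" using xb that by auto
    have "ennreal (integral {x..R} h) = (\<integral>\<^sup>+t\<in>{x..R}. ennreal (h t) \<partial>lborel)"
      using continuous_on_subset[OF ch sub2] hnn by (intro conv[symmetric]) auto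
    also have "\<dots> \<le> (\<integral>\<^sup>+t\<in>{x..}. ennreal (h t) \<partial>lborel)" by (intro set_mono_nn) auto
    also have "\<dots> \<le> ennreal (c * x * h x)" using tail that by simp
    finally show ?thesis using c xb that hnn by (subst (asm) ennreal_le_iff) auto
  qed
  have seg: "integral {xbar..R} (\<lambda>x. \<bar>\<phi> x - \<phi> xbar\<bar> powr p * h x)
          \<le> (p*c) powr p * integral {xbar..R} (\<lambda>x. x powr p * \<bar>\<phi>' x\<bar> powr p * h x)"
    by (rule seg_right[OF xb _ p c dphi cphi' ch hnn tailR]) (simp add: R_def)
  have w0: "0 \<le> integral {xbar..R} (\<lambda>x. x powr p * \<bar>\<phi>' x\<bar> powr p * h x)"
    using hnn cw by (intro integral_nonneg integrable_continuous_interval) auto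
  have "(\<integral>\<^sup>+x\<in>{xbar..R}. ennreal (\<bar>\<phi> x - \<phi> xbar\<bar> powr p * h x) \<partial>lborel)
        = ennreal (integral {xbar..R} (\<lambda>x. \<bar>\<phi> x - \<phi> xbar\<bar> powr p * h x))"
    using cg hnn by (intro conv) auto
  also have "\<dots> \<le> ennreal ((p*c) powr p * integral {xbar..R} (\<lambda>x. x powr p * \<bar>\<phi>' x\<bar> powr p * h x))"
    using seg by (rule ennreal_leI)
  also have "\<dots> = ennreal ((p*c) powr p) * ennreal (integral {xbar..R} (\<lambda>x. x powr p * \<bar>\<phi>' x\<bar> powr p * h x))"
    using w0 by (intro ennreal_mult) auto
  also have "\<dots> = ennreal ((p*c) powr p) * (\<integral>\<^sup>+x\<in>{xbar..R}. ennreal (x powr p * \<bar>\<phi>' x\<bar> powr p * h x) \<partial>lborel)"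
    using cw hnn xb by (subst conv) auto
  also have "\<dots> \<le> ennreal ((p*c) powr p) * (\<integral>\<^sup>+x\<in>{xbar..}. ennreal (x powr p * \<bar>\<phi>' x\<bar> powr p * h x) \<partial>lborel)"
    by (intro mult_left_mono set_mono_nn) auto
  finally show "(\<integral>\<^sup>+x\<in>{xbar..xbar + real n}. ennreal (\<bar>\<phi> x - \<phi> xbar\<bar> powr p * h x) \<partial>lborel)
         \<le> ennreal ((p*c) powr p) * (\<integral>\<^sup>+x\<in>{xbar..}. ennreal (x powr p * \<bar>\<phi>' x\<bar> powr p * h x) \<partial>lborel)"
    unfolding R_def .
qed

lemma half_left:
  fixes \<phi> \<phi>' h :: "real \<Rightarrow> real" and xbar c p :: real
  assumes xb: "0 < xbar" and p: "1 \<le> p" and c: "0 \<le> c"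
    and dphi: "\<And>x. 0 < x \<Longrightarrow> (\<phi> has_real_derivative \<phi>' x) (at x)"
    and cphi': "continuous_on {0<..} \<phi>'"
    and ch: "continuous_on {0<..} h" and hnn: "\<And>x. 0 \<le> h x"
    and head: "\<And>x. 0 < x \<Longrightarrow> x \<le> xbar \<Longrightarrow> (\<integral>\<^sup>+t\<in>{0<..x}. ennreal (h t) \<partial>lborel) \<le> ennreal (c * x * h x)"
  shows "(\<integral>\<^sup>+x\<in>{0<..xbar}. ennreal (\<bar>\<phi> x - \<phi> xbar\<bar> powr p * h x) \<partial>lborel)
         \<le> ennreal ((p*c) powr p) * (\<integral>\<^sup>+x\<in>{0<..xbar}. ennreal (x powr p * \<bar>\<phi>' x\<bar> powr p * h x) \<partial>lborel)"
proof (rule lim_sets[where A="\<lambda>n. {xbar / real (Suc n)..xbar}"])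
  show "incseq (\<lambda>n. {xbar / real (Suc n)..xbar})"
  proof (rule incseq_SucI)
    fix n
    have "xbar / real (Suc (Suc n)) \<le> xbar / real (Suc n)"
      using xb by (intro divide_left_mono) auto
    then show "{xbar / real (Suc n)..xbar} \<subseteq> {xbar / real (Suc (Suc n))..xbar}" by auto
  qed
  show "(\<Union>n. {xbar / real (Suc n)..xbar}) = {0<..xbar}"
  proof (intro set_eqI iffI)
    fix x assume "x \<in> (\<Union>n. {xbar / real (Suc n)..xbar})"
    then obtain n where "xbar / real (Suc n) \<le> x" "x \<le> xbar" by auto
    moreover have "0 < xbar / real (Suc n)" using xb by simp
    ultimately show "x \<in> {0<..xbar}" by auto
  next
    fix x assume "x \<in> {0<..xbar}"
    then have x: "0 < x" "x \<le> xbar" by auto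
    obtain n where n: "xbar / x \<le> real n" using real_arch_simple by blast
    have "xbar / real (Suc n) \<le> x"
    proof -
      have "xbar \<le> x * real n" using n x by (simp add: field_simps)
      also have "\<dots> \<le> x * real (Suc n)" using x by (intro mult_left_mono) auto
      finally show ?thesis by (simp add: field_simps)
    qed
    then show "x \<in> (\<Union>n. {xbar / real (Suc n)..xbar})" using x by (intro UN_I[of n]) auto
  qed
  have cphi: "continuous_on {0<..} \<phi>"
  proof (rule DERIV_continuous_on[where D=\<phi>'])
    fix x :: real assume "x \<in> {0<..}"
    then show "(\<phi> has_field_derivative \<phi>' x) (at x within {0<..})"
      by (intro has_field_derivative_at_within[OF dphi]) simp
  qed
  fix n
  define r where "r = xbar / real (Suc n)"
  have r: "0 < r" "r \<le> xbar" using xb unfolding r_def by (auto simp: field_simps)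
  have sub: "{r..xbar} \<subseteq> {0<..}" using r by auto
  have cg: "continuous_on {r..xbar} (\<lambda>x. \<bar>\<phi> x - \<phi> xbar\<bar> powr p * h x)"
    using p continuous_on_subset[OF cphi sub] continuous_on_subset[OF ch sub]
    by (intro continuous_intros continuous_on_powr') auto
  show "(\<lambda>x. ennreal (\<bar>\<phi> x - \<phi> xbar\<bar> powr p * h x) * indicator {xbar / real (Suc n)..xbar} x) \<in> borel_measurable borel"
    using cg unfolding r_def by (intro meas_cont) auto
  have cw: "continuous_on {r..xbar} (\<lambda>x. x powr p * \<bar>\<phi>' x\<bar> powr p * h x)"
    using p continuous_on_subset[OF cphi' sub] continuous_on_subset[OF ch sub] r
    by (intro continuous_intros continuous_on_powr') auto
  have headR: "integral {r..x} h \<le> c * x * h x" if "r \<le> x" "x \<le> xbar" for x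
  proof -
    have sub2: "{r..x} \<subseteq> {0<..}" using r that by auto
    have "ennreal (integral {r..x} h) = (\<integral>\<^sup>+t\<in>{r..x}. ennreal (h t) \<partial>lborel)"
      using continuous_on_subset[OF ch sub2] hnn by (intro conv[symmetric]) auto
    also have "\<dots> \<le> (\<integral>\<^sup>+t\<in>{0<..x}. ennreal (h t) \<partial>lborel)" using r by (intro set_mono_nn) auto
    also have "\<dots> \<le> ennreal (c * x * h x)" using head that r by simp
    finally show ?thesis using c r that hnn by (subst (asm) ennreal_le_iff) auto
  qed
  have seg: "integral {r..xbar} (\<lambda>x. \<bar>\<phi> x - \<phi> xbar\<bar> powr p * h x)
          \<le> (p*c) powr p * integral {r..xbar} (\<lambda>x. x powr p * \<bar>\<phi>' x\<bar> powr p * h x)"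
    by (rule seg_left[OF r p c dphi cphi' ch hnn headR])
  have w0: "0 \<le> integral {r..xbar} (\<lambda>x. x powr p * \<bar>\<phi>' x\<bar> powr p * h x)"
    using hnn cw by (intro integral_nonneg integrable_continuous_interval) auto
  have "(\<integral>\<^sup>+x\<in>{r..xbar}. ennreal (\<bar>\<phi> x - \<phi> xbar\<bar> powr p * h x) \<partial>lborel)
        = ennreal (integral {r..xbar} (\<lambda>x. \<bar>\<phi> x - \<phi> xbar\<bar> powr p * h x))"
    using cg hnn by (intro conv) auto
  also have "\<dots> \<le> ennreal ((p*c) powr p * integral {r..xbar} (\<lambda>x. x powr p * \<bar>\<phi>' x\<bar> powr p * h x))"
    using seg by (rule ennreal_leI)
  also have "\<dots> = ennreal ((p*c) powr p) * ennreal (integral {r..xbar} (\<lambda>x. x powr p * \<bar>\<phi>' x\<bar> powr p * h x))"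
    using w0 by (intro ennreal_mult) auto
  also have "\<dots> = ennreal ((p*c) powr p) * (\<integral>\<^sup>+x\<in>{r..xbar}. ennreal (x powr p * \<bar>\<phi>' x\<bar> powr p * h x) \<partial>lborel)"
    using cw hnn r by (subst conv) auto
  also have "\<dots> \<le> ennreal ((p*c) powr p) * (\<integral>\<^sup>+x\<in>{0<..xbar}. ennreal (x powr p * \<bar>\<phi>' x\<bar> powr p * h x) \<partial>lborel)"
    using r by (intro mult_left_mono set_mono_nn) auto
  finally show "(\<integral>\<^sup>+x\<in>{xbar / real (Suc n)..xbar}. ennreal (\<bar>\<phi> x - \<phi> xbar\<bar> powr p * h x) \<partial>lborel)
         \<le> ennreal ((p*c) powr p) * (\<integral>\<^sup>+x\<in>{0<..xbar}. ennreal (x powr p * \<bar>\<phi>' x\<bar> powr p * h x) \<partial>lborel)"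
    unfolding r_def .
qed

lemma convex2:
  fixes u v p :: real
  assumes u: "0 \<le> u" and v: "0 \<le> v" and p: "1 \<le> p"
  shows "(u + v) powr p \<le> 2 powr (p - 1) * (u powr p + v powr p)"
proof -
  have two: "1 \<le> 2 powr (p - 1)" using p by (simp add: ge_one_powr_ge_zero)
  show ?thesis
  proof (cases "u = 0 \<or> v = 0")
    case True
    then show ?thesis
    proof
      assume "u = 0"
      then show ?thesis using two v by (simp add: mult_le_cancel_right1 powr_ge_zero)
    next
      assume "v = 0"
      then show ?thesis using two u by (simp add: mult_le_cancel_right1 powr_ge_zero)
    qed
  next
    case False
    then have uv: "0 < u" "0 < v" using u v by auto
    have "((1 - 1/2) *\<^sub>R u + (1/2) *\<^sub>R v) powr p \<le> (1 - 1/2) * u powr p + (1/2) * v powr p"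
      using uv by (intro convex_onD[OF powr_convex[OF p]]) auto
    then have h: "((u + v) / 2) powr p \<le> (u powr p + v powr p) / 2" by (simp add: field_simps)
    have "(u + v) powr p = 2 powr p * ((u + v) / 2) powr p"
    proof -
      have "2 powr p * ((u + v) / 2) powr p = (2 * ((u + v) / 2)) powr p"
        using uv by (subst powr_mult) auto
      moreover have "2 * ((u + v) / 2) = u + v" by simp
      ultimately show ?thesis by (simp only:)
    qed
    also have "\<dots> \<le> 2 powr p * ((u powr p + v powr p) / 2)" using h by (intro mult_left_mono) auto
    also have "\<dots> = 2 powr (p - 1) * (u powr p + v powr p)" by (simp add: powr_diff)
    finally show ?thesis .
  qed
qed

lemma le_one_plus_powr:
  fixes t p :: real assumes "0 \<le> t" "1 \<le> p"
  shows "t \<le> 1 + t powr p"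
proof (cases "t \<le> 1")
  case True then show ?thesis by (simp add: add_increasing2)
next
  case False
  then have "t powr 1 \<le> t powr p" using assms by (intro powr_mono) auto
  then show ?thesis using False by simp
qed

lemma measR:
  fixes f :: "real \<Rightarrow> real"
  assumes "continuous_on {0<..} f"
  shows "(\<lambda>x. indicator {0<..} x * f x) \<in> borel_measurable lborel"
  using borel_measurable_continuous_on_indicator[OF _ assms] by simp

lemma centering:
  fixes \<phi> h :: "real \<Rightarrow> real" and a p :: real
  assumes p: "1 \<le> p" and hnn: "\<And>x. 0 \<le> h x"
    and cphi: "continuous_on {0<..} \<phi>" and ch: "continuous_on {0<..} h"
    and h1: "(\<integral>\<^sup>+x\<in>{0<..}. ennreal (h x) \<partial>lborel) = 1"
  shows "(\<integral>\<^sup>+x\<in>{0<..}. ennreal (\<bar>\<phi> x - (LINT y:{0<..}|lborel. \<phi> y * h y)\<bar> powr p * h x) \<partial>lborel)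
         \<le> ennreal (2 powr p) * (\<integral>\<^sup>+x\<in>{0<..}. ennreal (\<bar>\<phi> x - a\<bar> powr p * h x) \<partial>lborel)"
proof -
  define S where "S = ({0<..} :: real set)"
  define E where "E = (LINT y:S|lborel. \<phi> y * h y)"
  define g where "g x = \<phi> x - a" for x
  define e where "e = E - a"
  define Ia where "Ia = (\<integral>\<^sup>+x\<in>S. ennreal (\<bar>g x\<bar> powr p * h x) \<partial>lborel)"
  have cg: "continuous_on S g" unfolding g_def S_def by (intro continuous_intros cphi)
  have chS: "continuous_on S h" using ch unfolding S_def .
  have cgp: "continuous_on S (\<lambda>x. \<bar>g x\<bar> powr p * h x)"
    using p by (intro continuous_intros cg chS continuous_on_powr') auto
  have mEp: "(\<lambda>x. ennreal (\<bar>g x\<bar> powr p * h x) * indicator S x) \<in> borel_measurable lborel"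
    using meas_cont[OF cgp] unfolding S_def by simp
  have mh: "(\<lambda>x. ennreal (h x) * indicator S x) \<in> borel_measurable lborel"
    using meas_cont[OF chS] unfolding S_def by simp
  have eB: "ennreal (\<bar>e\<bar> powr p) \<le> Ia"
  proof (cases "Ia = \<infinity>")
    case True then show ?thesis by simp
  next
    case False
    then have Iafin: "Ia < \<infinity>" by (simp add: less_top)
    define Fp where "Fp x = indicator S x * (\<bar>g x\<bar> powr p * h x)" for x
    define H where "H x = indicator S x * h x" for x
    define F1 where "F1 x = indicator S x * (\<bar>g x\<bar> * h x)" for x
    define G where "G x = indicator S x * (g x * h x)" for x
    have mFp: "Fp \<in> borel_measurable lborel" unfolding Fp_def S_def by (rule measR) (use cgp S_def in simp)
    have mH: "H \<in> borel_measurable lborel" unfolding H_def S_def by (rule measR) (use ch in simp)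
    have mF1: "F1 \<in> borel_measurable lborel" unfolding F1_def S_def
      by (rule measR) (use cg chS S_def in \<open>auto intro!: continuous_intros\<close>)
    have mG: "G \<in> borel_measurable lborel" unfolding G_def S_def
      by (rule measR) (use cg chS S_def in \<open>auto intro!: continuous_intros\<close>)
    have nnFp: "(\<integral>\<^sup>+x. ennreal (Fp x) \<partial>lborel) = Ia"
      unfolding Ia_def Fp_def by (intro nn_integral_cong) (auto simp: indicator_def)
    have nnH: "(\<integral>\<^sup>+x. ennreal (H x) \<partial>lborel) = 1"
      using h1 unfolding H_def S_def by (subst nn_integral_cong[where v="\<lambda>x. ennreal (h x) * indicator {0<..} x"]) (auto simp: indicator_def)
    have Fp0: "0 \<le> Fp x" for x unfolding Fp_def using hnn by simp
    have H0: "0 \<le> H x" for x unfolding H_def using hnn by simp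
    have intFp: "integrable lborel Fp"
      using mFp Fp0 nnFp Iafin by (intro integrableI_nonneg) auto
    have intH: "integrable lborel H"
      using mH H0 nnH by (intro integrableI_nonneg) auto
    have LH: "(LINT x|lborel. H x) = 1"
      using nn_integral_eq_integral[OF intH] H0 nnH by simp
    have LFp: "ennreal (LINT x|lborel. Fp x) = Ia"
      using nn_integral_eq_integral[OF intFp] Fp0 nnFp by simp
    have intF1: "integrable lborel F1"
    proof (rule Bochner_Integration.integrable_bound[OF Bochner_Integration.integrable_add[OF intH intFp] mF1])
      show "AE x in lborel. norm (F1 x) \<le> norm (H x + Fp x)"
      proof (intro AE_I2)
        fix x
        have "\<bar>g x\<bar> * h x \<le> (1 + \<bar>g x\<bar> powr p) * h x"
          using hnn p by (intro mult_right_mono le_one_plus_powr) auto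
        then show "norm (F1 x) \<le> norm (H x + Fp x)"
          unfolding F1_def H_def Fp_def using hnn by (auto simp: indicator_def algebra_simps)
      qed
    qed
    have intG: "integrable lborel G"
    proof (rule Bochner_Integration.integrable_bound[OF intF1 mG])
      show "AE x in lborel. norm (G x) \<le> norm (F1 x)"
        unfolding G_def F1_def using hnn by (intro AE_I2) (auto simp: indicator_def abs_mult)
    qed
    have Eeq: "E = (LINT x|lborel. G x) + a * (LINT x|lborel. H x)"
    proof -
      have "E = (LINT x|lborel. G x + a * H x)"
        unfolding E_def set_lebesgue_integral_def G_def H_def g_def
        by (intro Bochner_Integration.integral_cong) (auto simp: indicator_def algebra_simps)
      also have "\<dots> = (LINT x|lborel. G x) + a * (LINT x|lborel. H x)"
        using intG intH by simp
      finally show ?thesis .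
    qed
    define s where "s = (LINT x|lborel. F1 x)"
    have es: "\<bar>e\<bar> \<le> s"
    proof -
      have "e = (LINT x|lborel. G x)" unfolding e_def using Eeq LH by simp
      also have "\<bar>\<dots>\<bar> \<le> s" unfolding s_def
        using hnn by (intro integral_abs_bound_integral[OF intG intF1]) (auto simp: G_def F1_def indicator_def abs_mult)
      finally show ?thesis .
    qed
    have s0: "0 \<le> s" using es by simp
    define J where "J = (LINT x|lborel. Fp x)"
    have J0: "0 \<le> J" unfolding J_def using Fp0 by (intro integral_nonneg_AE) auto
    have sJ: "s powr p \<le> J"
    proof (cases "s = 0")
      case True then show ?thesis using J0 by simp
    next
      case False
      then have sp: "s > 0" using s0 by simp
      have pt: "s powr (p-1) * F1 x \<le> (1 - 1/p) * s powr p * H x + (1/p) * Fp x" for x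
      proof -
        have "s powr (p-1) * \<bar>g x\<bar> \<le> (1 - 1/p) * s powr p + (1/p) * \<bar>g x\<bar> powr p"
          using sp p by (intro young_p) auto
        then have "s powr (p-1) * \<bar>g x\<bar> * h x \<le> ((1 - 1/p) * s powr p + (1/p) * \<bar>g x\<bar> powr p) * h x"
          using hnn by (intro mult_right_mono) auto
        then show ?thesis unfolding F1_def H_def Fp_def by (auto simp: indicator_def algebra_simps)
      qed
      have "s powr (p-1) * s \<le> (1 - 1/p) * s powr p * 1 + (1/p) * J"
      proof -
        have "(LINT x|lborel. s powr (p-1) * F1 x) \<le> (LINT x|lborel. (1 - 1/p) * s powr p * H x + (1/p) * Fp x)"
          using intF1 intH intFp pt by (intro integral_mono) auto
        then show ?thesis using intF1 intH intFp LH unfolding s_def J_def by simp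
      qed
      moreover have "s powr (p-1) * s = s powr p"
      proof -
        have "s powr (p-1) * s = s powr (p-1) * s powr 1" using sp by simp
        also have "\<dots> = s powr (p - 1 + 1)" by (rule powr_add[symmetric])
        finally show ?thesis by simp
      qed
      ultimately have "s powr p / p \<le> J / p" using p by (simp add: field_simps)
      then show ?thesis using p by (simp add: divide_le_cancel)
    qed
    have "\<bar>e\<bar> powr p \<le> s powr p" using es p by (intro powr_mono2) auto
    then have "\<bar>e\<bar> powr p \<le> J" using sJ by simp
    then have "ennreal (\<bar>e\<bar> powr p) \<le> ennreal J" by (rule ennreal_leI)
    then show ?thesis using LFp unfolding J_def by simp
  qed
  have pt: "\<bar>\<phi> x - E\<bar> powr p * h x \<le> 2 powr (p-1) * (\<bar>g x\<bar> powr p * h x + \<bar>e\<bar> powr p * h x)" for x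
  proof -
    have "\<bar>\<phi> x - E\<bar> \<le> \<bar>g x\<bar> + \<bar>e\<bar>" unfolding g_def e_def by simp
    then have "\<bar>\<phi> x - E\<bar> powr p \<le> (\<bar>g x\<bar> + \<bar>e\<bar>) powr p" using p by (intro powr_mono2) auto
    also have "\<dots> \<le> 2 powr (p-1) * (\<bar>g x\<bar> powr p + \<bar>e\<bar> powr p)" using p by (intro convex2) auto
    finally have "\<bar>\<phi> x - E\<bar> powr p * h x \<le> 2 powr (p-1) * (\<bar>g x\<bar> powr p + \<bar>e\<bar> powr p) * h x"
      by (rule mult_right_mono[OF _ hnn])
    then show ?thesis by (simp add: algebra_simps)
  qed
  have "(\<integral>\<^sup>+x\<in>S. ennreal (\<bar>\<phi> x - E\<bar> powr p * h x) \<partial>lborel)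
      \<le> (\<integral>\<^sup>+x. ennreal (2 powr (p-1)) * (ennreal (\<bar>g x\<bar> powr p * h x) * indicator S x + ennreal (\<bar>e\<bar> powr p) * (ennreal (h x) * indicator S x)) \<partial>lborel)"
  proof (intro nn_integral_mono)
    fix x
    have "ennreal (\<bar>\<phi> x - E\<bar> powr p * h x) \<le> ennreal (2 powr (p-1) * (\<bar>g x\<bar> powr p * h x + \<bar>e\<bar> powr p * h x))"
      using pt by (rule ennreal_leI)
    also have "\<dots> = ennreal (2 powr (p-1)) * (ennreal (\<bar>g x\<bar> powr p * h x) + ennreal (\<bar>e\<bar> powr p) * ennreal (h x))"
    proof -
      have A0: "0 \<le> \<bar>g x\<bar> powr p * h x" "0 \<le> \<bar>e\<bar> powr p * h x" using hnn[of x] by auto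
      have a: "ennreal (2 powr (p-1) * (\<bar>g x\<bar> powr p * h x + \<bar>e\<bar> powr p * h x))
          = ennreal (2 powr (p-1)) * ennreal (\<bar>g x\<bar> powr p * h x + \<bar>e\<bar> powr p * h x)"
        using A0 by (intro ennreal_mult) auto
      have b: "ennreal (\<bar>g x\<bar> powr p * h x + \<bar>e\<bar> powr p * h x) = ennreal (\<bar>g x\<bar> powr p * h x) + ennreal (\<bar>e\<bar> powr p * h x)"
        using A0 by (intro ennreal_plus) auto
      have c: "ennreal (\<bar>e\<bar> powr p * h x) = ennreal (\<bar>e\<bar> powr p) * ennreal (h x)"
        using hnn[of x] by (intro ennreal_mult) auto
      show ?thesis by (simp only: a b c)
    qed
    finally show "ennreal (\<bar>\<phi> x - E\<bar> powr p * h x) * indicator S x \<le> ennreal (2 powr (p-1)) * (ennreal (\<bar>g x\<bar> powr p * h x) * indicator S x + ennreal (\<bar>e\<bar> powr p) * (ennreal (h x) * indicator S x))"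
      by (auto simp: indicator_def)
  qed
  also have "\<dots> = ennreal (2 powr (p-1)) * (Ia + ennreal (\<bar>e\<bar> powr p) * 1)"
    using mEp mh h1 unfolding Ia_def S_def
    by (simp add: nn_integral_cmult nn_integral_add)
  also have "\<dots> \<le> ennreal (2 powr (p-1)) * (Ia + Ia)"
    using eB by (intro mult_left_mono add_left_mono) auto
  also have "\<dots> = ennreal (2 powr p) * Ia"
  proof -
    have "ennreal (2 powr (p-1)) * (Ia + Ia) = ennreal (2 powr (p-1)) * ennreal 2 * Ia"
      by (simp add: mult_2[symmetric] mult.assoc)
    also have "ennreal (2 powr (p-1)) * ennreal 2 = ennreal (2 powr (p-1) * 2)"
      by (simp add: ennreal_mult)
    also have "2 powr (p-1) * 2 = (2::real) powr p" by (simp add: powr_diff)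
    finally show ?thesis .
  qed
  finally show ?thesis unfolding S_def E_def Ia_def g_def .
qed

theorem theorem4p3:
  fixes \<beta> m xbar p :: real and \<phi> :: "real \<Rightarrow> real"
  assumes "\<beta> > 1/2" and "m > 0"
    and "xbar > 0" and "(LINT x:{0<..xbar}|lborel. h_dens \<beta> m x) = 1/2"
    and "1 \<le> p"
    and "smooth_on {0<..} \<phi>"
    and "(\<integral>\<^sup>+x\<in>{0<..}. ennreal (\<bar>\<phi> x\<bar> powr p * h_dens \<beta> m x) \<partial>lborel) < \<infinity>"
  shows "(\<integral>\<^sup>+x\<in>{0<..}. ennreal (\<bar>\<phi> x - (LINT y:{0<..}|lborel. \<phi> y * h_dens \<beta> m y)\<bar> powr p
              * h_dens \<beta> m x) \<partial>lborel)
         \<le> ennreal ((p * (1 / (xbar * h_dens \<beta> m xbar))) powr p)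
           * (\<integral>\<^sup>+x\<in>{0<..}. ennreal (x powr p * \<bar>deriv \<phi> x\<bar> powr p * h_dens \<beta> m x) \<partial>lborel)"
proof -
  note m = assms(2) and xb = assms(3) and med = assms(4) and p = assms(5) and sm = assms(6)
  note DF = dens_facts[OF m xb med]
  define h where "h = h_dens \<beta> m"
  have Cpos: "C_const \<beta> m > 0" by (rule DF(1))
  have hpos: "\<And>x. x > 0 \<Longrightarrow> h x > 0" unfolding h_def by (rule DF(2))
  have hnn: "\<And>x. h x \<ge> 0" unfolding h_def by (rule DF(3))
  have ch: "continuous_on {0<..} h" unfolding h_def by (rule DF(4))
  have h1: "(\<integral>\<^sup>+x\<in>{0<..}. ennreal (h x) \<partial>lborel) = 1" unfolding h_def by (rule DF(6))
  have hhalf: "(\<integral>\<^sup>+x\<in>{0<..xbar}. ennreal (h x) \<partial>lborel) = ennreal (1/2)" unfolding h_def by (rule DF(7))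
  have hxb: "h xbar > 0" using hpos xb by simp
  have mh: "(\<lambda>x. ennreal (h x) * indicator {0<..} x) \<in> borel_measurable borel"
    unfolding h_def by measurable
  have "1 = ennreal (1/2) + (\<integral>\<^sup>+x\<in>{xbar..}. ennreal (h x) \<partial>lborel)"
    using split_int[OF xb mh] h1 hhalf by simp
  moreover have "(1::ennreal) = ennreal (1/2) + ennreal (1/2)"
  proof -
    have "ennreal (1/2) + ennreal (1/2) = ennreal (1/2 + 1/2)" by (rule ennreal_plus[symmetric]) auto
    then show ?thesis by simp
  qed
  ultimately have "ennreal (1/2) + (\<integral>\<^sup>+x\<in>{xbar..}. ennreal (h x) \<partial>lborel) = ennreal (1/2) + ennreal (1/2)"
    by simp
  then have rhalf: "(\<integral>\<^sup>+x\<in>{xbar..}. ennreal (h x) \<partial>lborel) = ennreal (1/2)"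
    unfolding ennreal_add_left_cancel by simp
  define c where "c = 1 / (2 * (xbar * h xbar))"
  have c0: "0 \<le> c" unfolding c_def using xb hxb by simp
  have ceq: "ennreal (x * h x / (xbar * h xbar)) * ennreal (1/2) = ennreal (c * x * h x)" if "x > 0" for x
  proof -
    have "ennreal (x * h x / (xbar * h xbar)) * ennreal (1/2) = ennreal (x * h x / (xbar * h xbar) * (1/2))"
      using that hnn[of x] xb hxb by (intro ennreal_mult[symmetric]) auto
    also have "x * h x / (xbar * h xbar) * (1/2) = c * x * h x" unfolding c_def by simp
    finally show ?thesis .
  qed
  have tail: "(\<integral>\<^sup>+t\<in>{x..}. ennreal (h t) \<partial>lborel) \<le> ennreal (c * x * h x)" if "xbar \<le> x" for x
    using hazard_right[OF Cpos xb that m] rhalf ceq[of x] that xb unfolding h_def by simp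
  have head: "(\<integral>\<^sup>+t\<in>{0<..x}. ennreal (h t) \<partial>lborel) \<le> ennreal (c * x * h x)" if "0 < x" "x \<le> xbar" for x
    using hazard_left[OF Cpos that(2) that(1) m] hhalf ceq[of x] that unfolding h_def by simp
  have dphi: "(\<phi> has_real_derivative deriv \<phi> x) (at x)" if "0 < x" for x
  proof -
    have "((deriv ^^ 0) \<phi>) differentiable (at x)" using sm that unfolding smooth_on_def by blast
    then show ?thesis by (simp add: DERIV_deriv_iff_real_differentiable)
  qed
  have cphi': "continuous_on {0<..} (deriv \<phi>)"
  proof (rule continuous_at_imp_continuous_on, rule ballI)
    fix x :: real assume "x \<in> {0<..}"
    then have "((deriv ^^ 1) \<phi>) differentiable (at x)" using sm unfolding smooth_on_def by blast
    then have "(deriv \<phi> has_real_derivative deriv (deriv \<phi>) x) (at x)"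
      by (simp add: DERIV_deriv_iff_real_differentiable)
    then show "isCont (deriv \<phi>) x" by (rule DERIV_isCont)
  qed
  have cphi: "continuous_on {0<..} \<phi>"
  proof (rule continuous_at_imp_continuous_on, rule ballI)
    fix x :: real assume "x \<in> {0<..}"
    then show "isCont \<phi> x" using dphi[of x] by (intro DERIV_isCont) auto
  qed
  define G where "G x = ennreal (\<bar>\<phi> x - \<phi> xbar\<bar> powr p * h x)" for x
  define W where "W x = ennreal (x powr p * \<bar>deriv \<phi> x\<bar> powr p * h x)" for x
  define K where "K = (p * c) powr p"
  have mG: "(\<lambda>x. G x * indicator {0<..} x) \<in> borel_measurable borel"
    unfolding G_def using p by (intro meas_cont continuous_intros continuous_on_powr' cphi ch) auto
  have mW: "(\<lambda>x. W x * indicator {0<..} x) \<in> borel_measurable borel"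
    unfolding W_def using p by (intro meas_cont continuous_intros continuous_on_powr' cphi' ch) auto
  have L: "(\<integral>\<^sup>+x\<in>{0<..xbar}. G x \<partial>lborel) \<le> ennreal K * (\<integral>\<^sup>+x\<in>{0<..xbar}. W x \<partial>lborel)"
    unfolding G_def W_def K_def using half_left[OF xb p c0 dphi cphi' ch hnn head] by simp
  have R: "(\<integral>\<^sup>+x\<in>{xbar..}. G x \<partial>lborel) \<le> ennreal K * (\<integral>\<^sup>+x\<in>{xbar..}. W x \<partial>lborel)"
    unfolding G_def W_def K_def using half_right[OF xb p c0 dphi cphi' ch hnn tail] by simp
  have main: "(\<integral>\<^sup>+x\<in>{0<..}. G x \<partial>lborel) \<le> ennreal K * (\<integral>\<^sup>+x\<in>{0<..}. W x \<partial>lborel)"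
  proof -
    have "(\<integral>\<^sup>+x\<in>{0<..}. G x \<partial>lborel) = (\<integral>\<^sup>+x\<in>{0<..xbar}. G x \<partial>lborel) + (\<integral>\<^sup>+x\<in>{xbar..}. G x \<partial>lborel)"
      by (rule split_int[OF xb mG])
    also have "\<dots> \<le> ennreal K * (\<integral>\<^sup>+x\<in>{0<..xbar}. W x \<partial>lborel) + ennreal K * (\<integral>\<^sup>+x\<in>{xbar..}. W x \<partial>lborel)"
      using L R by (rule add_mono)
    also have "\<dots> = ennreal K * (\<integral>\<^sup>+x\<in>{0<..}. W x \<partial>lborel)"
      by (simp add: split_int[OF xb mW] distrib_left)
    finally show ?thesis .
  qed
  have cent: "(\<integral>\<^sup>+x\<in>{0<..}. ennreal (\<bar>\<phi> x - (LINT y:{0<..}|lborel. \<phi> y * h y)\<bar> powr p * h x) \<partial>lborel)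
         \<le> ennreal (2 powr p) * (\<integral>\<^sup>+x\<in>{0<..}. G x \<partial>lborel)"
    unfolding G_def by (rule centering[OF p hnn cphi ch h1])
  also have "\<dots> \<le> ennreal (2 powr p) * (ennreal K * (\<integral>\<^sup>+x\<in>{0<..}. W x \<partial>lborel))"
    using main by (rule mult_left_mono) simp
  also have "\<dots> = ennreal (2 powr p * K) * (\<integral>\<^sup>+x\<in>{0<..}. W x \<partial>lborel)"
    unfolding K_def by (simp add: ennreal_mult mult.assoc)
  also have "2 powr p * K = (p * (1 / (xbar * h xbar))) powr p"
  proof -
    have "2 powr p * K = (2 * (p * c)) powr p" unfolding K_def using p c0 by (simp add: powr_mult)
    also have "2 * (p * c) = p * (1 / (xbar * h xbar))" unfolding c_def by simp
    finally show ?thesis .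
  qed
  finally show ?thesis unfolding h_def W_def .
qed

end
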